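(* Let $\mu,\nu$ be weights on $\mathbb{R}^n$, $K$ a locally integrable function on $\mathbb{R}^n$, and $W,E\subset\mathbb{R}^n$ measurable sets. Then $$\left|\int_W\mu(x)\int_E\nu(y)K(y-x)\,dy\,dx\right|\le\int_0^{|W|}\mu^*(s)\int_0^{|E|}\nu^*(t)\,K^{**}(\max(t,s))\,dt\,ds .$$
   Context: A weight is a nonnegative locally integrable function. $\psi^*$ is the decreasing rearrangement of $\psi$, and $\psi^{**}(t)=\frac1t\int_0^t\psi^*(s)\,ds$ $(t>0)$. *)

theory Defs
  imports "HOL-Analysis.Analysis"
begin

definition locally_integrable :: "('a::euclidean_space \<Rightarrow> real) \<Rightarrow> bool" where
  "locally_integrable f \<longleftrightarrow> (\<forall>C. compact C \<longrightarrow> set_integrable lebesgue C f)"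

definition weight :: "('a::euclidean_space \<Rightarrow> real) \<Rightarrow> bool" where
  "weight w \<longleftrightarrow> (\<forall>x. 0 \<le> w x) \<and> locally_integrable w"

text \<open>Decreasing rearrangement psi*(t) = inf of lambda with |{|psi| > lambda}| <= t
  (extended-real valued, since it may be infinite).\<close>
definition decr_rearr :: "('a::euclidean_space \<Rightarrow> real) \<Rightarrow> real \<Rightarrow> ennreal" where
  "decr_rearr \<psi> t = Inf {c::ennreal. emeasure lebesgue {x. c < ennreal \<bar>\<psi> x\<bar>} \<le> ennreal t}"

definition max_fn :: "('a::euclidean_space \<Rightarrow> real) \<Rightarrow> real \<Rightarrow> ennreal" where
  "max_fn \<psi> t = ennreal (1 / t) * (\<integral>\<^sup>+ s\<in>{0<..<t}. decr_rearr \<psi> s \<partial>lborel)"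

end

theory Submission
  imports Defs
begin

lemma ennreal_inf_if_ge_all: "(\<And>x::real. x \<ge> 0 \<Longrightarrow> ennreal x \<le> y) \<Longrightarrow> y = \<infinity>"
proof (rule ccontr)
  assume h: "\<And>x::real. x \<ge> 0 \<Longrightarrow> ennreal x \<le> y" and "y \<noteq> \<infinity>"
  then obtain r where r: "y = ennreal r" "0 \<le> r" by (cases y) auto
  have "ennreal (r+1) \<le> ennreal r" using h[of "r+1"] r by simp
  then show False using r by (simp add: ennreal_le_iff2)
qed

lemma emeasure_Ioi_inf: "emeasure lborel {0::real<..} = \<infinity>"
proof (rule ennreal_inf_if_ge_all)
  fix x :: real assume "x \<ge> 0"
  have "ennreal x = emeasure lborel {0<..<x}" using \<open>x \<ge> 0\<close> by simp
  also have "\<dots> \<le> emeasure lborel {0::real<..}" by (rule emeasure_mono) auto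
  finally show "ennreal x \<le> emeasure lborel {0::real<..}" .
qed

lemma emeasure_Ioo_ennreal:
  "emeasure lborel {r::real. 0 < r \<and> ennreal r < v} = v"
proof (cases "v = \<infinity>")
  case True
  then have "{r::real. 0 < r \<and> ennreal r < v} = {0<..}" by auto
  then show ?thesis using True emeasure_Ioi_inf by simp
next
  case False
  then obtain w where w: "v = ennreal w" "0 \<le> w" by (cases v) auto
  then have "{r::real. 0 < r \<and> ennreal r < v} = {0<..<w}"
    by (auto simp: ennreal_less_iff)
  then show ?thesis using w by simp
qed

lemma sigma_finite_lebesgue: "sigma_finite_measure (lebesgue :: 'a::euclidean_space measure)"
proof
  show "\<exists>A. countable A \<and> A \<subseteq> sets (lebesgue::'a measure) \<and> \<Union> A = space lebesgue \<and> (\<forall>a\<in>A. emeasure lebesgue a \<noteq> \<infinity>)"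
    apply (rule exI[of _ "range (\<lambda>n::nat. cball (0::'a) (real n))"])
    apply auto
    apply (meson real_arch_simple)
    subgoal for a using emeasure_lborel_cball_finite[of "0::'a" "real a"] by simp
    done
qed

lemma layer_cake:
  fixes f :: "'a \<Rightarrow> ennreal"
  assumes M: "sigma_finite_measure M" and f[measurable]: "f \<in> borel_measurable M"
  shows "(\<integral>\<^sup>+x. f x \<partial>M) = (\<integral>\<^sup>+c. indicator {0<..} c * emeasure M {x\<in>space M. ennreal c < f x} \<partial>lborel)"
proof -
  interpret pair_sigma_finite M lborel
    using M by (simp add: pair_sigma_finite_def lborel.sigma_finite_measure_axioms)
  define F :: "'a \<Rightarrow> real \<Rightarrow> ennreal" where "F x c = indicator {0<..} c * indicator {x\<in>space M. ennreal c < f x} x" for x c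
  have Fm: "case_prod F \<in> borel_measurable (M \<Otimes>\<^sub>M lborel)"
    unfolding F_def by measurable
  have "(\<integral>\<^sup>+x. f x \<partial>M) = (\<integral>\<^sup>+x. \<integral>\<^sup>+c. F x c \<partial>lborel \<partial>M)"
  proof (rule nn_integral_cong)
    fix x assume x: "x \<in> space M"
    have "(\<integral>\<^sup>+c. F x c \<partial>lborel) = (\<integral>\<^sup>+c. indicator {c::real. 0 < c \<and> ennreal c < f x} c \<partial>lborel)"
      using x by (intro nn_integral_cong) (auto simp: F_def indicator_def)
    also have "\<dots> = f x"
      by (subst nn_integral_indicator) (auto simp: emeasure_Ioo_ennreal)
    finally show "f x = (\<integral>\<^sup>+c. F x c \<partial>lborel)" ..
  qed
  also have "\<dots> = (\<integral>\<^sup>+c. \<integral>\<^sup>+x. F x c \<partial>M \<partial>lborel)"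
    using Fubini'[OF Fm] by simp
  also have "\<dots> = (\<integral>\<^sup>+c. indicator {0<..} c * emeasure M {x\<in>space M. ennreal c < f x} \<partial>lborel)"
    unfolding F_def by (intro nn_integral_cong) (simp add: nn_integral_cmult_indicator)
  finally show ?thesis .
qed

lemma antimono_borel_measurable:
  fixes g :: "real \<Rightarrow> ennreal"
  assumes g: "\<And>x y. x \<le> y \<Longrightarrow> g y \<le> g x"
  shows "g \<in> borel_measurable borel"
proof (rule borel_measurableI_greater)
  fix y
  define D where "D = {x. y < g x}"
  have down: "x \<in> D" if "x' \<in> D" "x \<le> x'" for x x'
    using that g[of x x'] unfolding D_def by (auto intro: less_le_trans)
  have "D \<in> sets borel"
  proof (cases "D = UNIV \<or> D = {}")
    case True then show ?thesis by auto
  next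
    case False
    then obtain z a where z: "z \<notin> D" and a: "a \<in> D" by auto
    have ub: "x \<le> z" if "x \<in> D" for x
      using down[OF that, of z] z by (cases "x \<le> z") auto
    have bdd: "bdd_above D" using ub by (auto simp: bdd_above_def)
    define m where "m = Sup D"
    have "D = {..<m} \<union> (if m \<in> D then {m} else {})"
    proof (intro set_eqI iffI)
      fix x assume x: "x \<in> D"
      then have "x \<le> m" unfolding m_def using bdd by (rule cSup_upper)
      then show "x \<in> {..<m} \<union> (if m \<in> D then {m} else {})"
        using x by (cases "x = m") auto
    next
      fix x assume x: "x \<in> {..<m} \<union> (if m \<in> D then {m} else {})"
      show "x \<in> D"
      proof (cases "x < m")
        case True
        then obtain d where "d \<in> D" "x < d"
          using less_cSup_iff[of D x] a bdd unfolding m_def by auto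
        then show ?thesis using down by auto
      next
        case False then show ?thesis using x by (auto split: if_splits)
      qed
    qed
    also have "\<dots> \<in> sets borel" by auto
    finally show ?thesis .
  qed
  then show "{x \<in> space borel. y < g x} \<in> sets borel" unfolding D_def by simp
qed

lemma sets_lebesgue_Collect: "Measurable.pred lebesgue P \<Longrightarrow> {x. P x} \<in> sets lebesgue"
  unfolding pred_def by simp

lemma decr_rearr_antimono:
  "s \<le> t \<Longrightarrow> decr_rearr \<psi> t \<le> decr_rearr \<psi> s"
  unfolding decr_rearr_def
  by (rule Inf_superset_mono) (auto intro: order_trans ennreal_leI)

lemma decr_rearr_measurable[measurable]: "decr_rearr \<psi> \<in> borel_measurable borel"
  by (rule antimono_borel_measurable) (rule decr_rearr_antimono)

lemma decr_rearr_gt: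
  fixes \<psi> :: "'a::euclidean_space \<Rightarrow> real"
  assumes \<psi>[measurable]: "\<psi> \<in> borel_measurable lebesgue"
    and c0: "0 \<le> c0" and r: "ennreal r < emeasure lebesgue {x. ennreal c0 < ennreal \<bar>\<psi> x\<bar>}"
  shows "ennreal c0 < decr_rearr \<psi> r"
proof -
  define C where "C n = {x. ennreal (c0 + 1 / Suc n) < ennreal \<bar>\<psi> x\<bar>}" for n :: nat
  have C_sets: "C n \<in> sets lebesgue" for n unfolding C_def by (rule sets_lebesgue_Collect) measurable
  have inc: "incseq C"
    unfolding C_def incseq_def
    by (auto elim!: le_less_trans[rotated] intro!: ennreal_leI simp: frac_le)
  have U: "(\<Union>n. C n) = {x. ennreal c0 < ennreal \<bar>\<psi> x\<bar>}"
  proof (intro set_eqI iffI)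
    fix x assume "x \<in> (\<Union>n. C n)"
    then obtain n where "ennreal (c0 + 1 / Suc n) < ennreal \<bar>\<psi> x\<bar>" unfolding C_def by auto
    then show "x \<in> {x. ennreal c0 < ennreal \<bar>\<psi> x\<bar>}"
      by (auto elim!: le_less_trans[rotated] intro!: ennreal_leI)
  next
    fix x assume "x \<in> {x. ennreal c0 < ennreal \<bar>\<psi> x\<bar>}"
    then have h: "c0 < \<bar>\<psi> x\<bar>" using c0 by (simp add: ennreal_less_iff)
    then obtain n where "1 / Suc n < \<bar>\<psi> x\<bar> - c0"
      by (metis diff_gt_0_iff_gt nat_approx_posE)
    then have "ennreal (c0 + 1 / Suc n) < ennreal \<bar>\<psi> x\<bar>"
      using c0 by (subst ennreal_less_iff) auto
    then show "x \<in> (\<Union>n. C n)" unfolding C_def by auto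
  qed
  have "(SUP n. emeasure lebesgue (C n)) = emeasure lebesgue {x. ennreal c0 < ennreal \<bar>\<psi> x\<bar>}"
    using SUP_emeasure_incseq[OF _ inc, of lebesgue] C_sets U by (metis image_subset_iff)
  with r obtain n where n: "ennreal r < emeasure lebesgue (C n)"
    by (metis less_SUP_iff)
  have "ennreal (c0 + 1 / Suc n) \<le> decr_rearr \<psi> r"
    unfolding decr_rearr_def
  proof (rule Inf_greatest)
    fix c assume c: "c \<in> {c. emeasure lebesgue {x. c < ennreal \<bar>\<psi> x\<bar>} \<le> ennreal r}"
    show "ennreal (c0 + 1 / Suc n) \<le> c"
    proof (rule ccontr)
      assume "\<not> ennreal (c0 + 1 / Suc n) \<le> c"
      then have "C n \<subseteq> {x. c < ennreal \<bar>\<psi> x\<bar>}" unfolding C_def by auto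
      then have "emeasure lebesgue (C n) \<le> emeasure lebesgue {x. c < ennreal \<bar>\<psi> x\<bar>}"
        by (intro emeasure_mono sets_lebesgue_Collect) measurable
      with c n show False by auto
    qed
  qed
  moreover have "ennreal c0 < ennreal (c0 + 1 / Suc n)"
    using c0 by (auto simp: ennreal_less_iff)
  ultimately show ?thesis by (rule less_le_trans[rotated])
qed

lemma affine_lebesgue_measurable[measurable]:
  fixes d :: "'a::euclidean_space"
  shows "(\<lambda>z. \<sigma> *\<^sub>R z + d) \<in> lebesgue \<rightarrow>\<^sub>M lebesgue"
proof (cases "\<sigma> = 0")
  case True then show ?thesis by simp
next
  case False
  have "(\<lambda>x. d + (\<Sum>j\<in>Basis. (\<sigma> * (x \<bullet> j)) *\<^sub>R j)) = (\<lambda>z. \<sigma> *\<^sub>R z + d)"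
    unfolding scaleR_scaleR[symmetric] scaleR_sum_right[symmetric]
    by (auto simp add: euclidean_representation ac_simps)
  then show ?thesis using lebesgue_affine_measurable[of "\<lambda>_. \<sigma>" d] False by simp
qed

lemma HL:
  fixes \<psi> :: "'a::euclidean_space \<Rightarrow> real"
  assumes \<psi>[measurable]: "\<psi> \<in> borel_measurable lebesgue" and S[measurable]: "S \<in> sets lebesgue"
    and \<sigma>: "\<bar>\<sigma>\<bar> = 1"
  shows "(\<integral>\<^sup>+z. indicator S z * ennreal \<bar>\<psi> (\<sigma> *\<^sub>R z + d)\<bar> \<partial>lebesgue)
     \<le> (\<integral>\<^sup>+r. indicator {r. 0 < r \<and> ennreal r < emeasure lebesgue S} r * decr_rearr \<psi> r \<partial>lborel)"
proof -
  let ?L = "emeasure lebesgue S"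
  let ?D = "\<lambda>c. emeasure lebesgue {w. c < ennreal \<bar>\<psi> w\<bar>}"
  have m1: "(\<lambda>z. indicator S z * ennreal \<bar>\<psi> (\<sigma> *\<^sub>R z + d)\<bar>) \<in> borel_measurable lebesgue"
    by measurable
  have m2: "(\<lambda>r. indicator {r. 0 < r \<and> ennreal r < ?L} r * decr_rearr \<psi> r) \<in> borel_measurable lborel"
    by measurable
  have "(\<integral>\<^sup>+z. indicator S z * ennreal \<bar>\<psi> (\<sigma> *\<^sub>R z + d)\<bar> \<partial>lebesgue)
     = (\<integral>\<^sup>+c. indicator {0<..} c * emeasure lebesgue {z. ennreal c < indicator S z * ennreal \<bar>\<psi> (\<sigma> *\<^sub>R z + d)\<bar>} \<partial>lborel)"
    using layer_cake[OF sigma_finite_lebesgue m1] by simp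
  also have "\<dots> \<le> (\<integral>\<^sup>+c. indicator {0<..} c * emeasure lborel {r. ennreal c < indicator {r. 0 < r \<and> ennreal r < ?L} r * decr_rearr \<psi> r} \<partial>lborel)"
  proof (rule nn_integral_mono)
    fix c :: real
    show "indicator {0<..} c * emeasure lebesgue {z. ennreal c < indicator S z * ennreal \<bar>\<psi> (\<sigma> *\<^sub>R z + d)\<bar>}
      \<le> indicator {0<..} c * emeasure lborel {r. ennreal c < indicator {r. 0 < r \<and> ennreal r < ?L} r * decr_rearr \<psi> r}"
    proof (cases "c > 0")
      case False then show ?thesis by simp
    next
      case c: True
      have e1: "{z. ennreal c < indicator S z * ennreal \<bar>\<psi> (\<sigma> *\<^sub>R z + d)\<bar>} = S \<inter> {z. ennreal c < ennreal \<bar>\<psi> (\<sigma> *\<^sub>R z + d)\<bar>}"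
        using c by (auto simp: indicator_def)
      have e2: "{z. ennreal c < ennreal \<bar>\<psi> (\<sigma> *\<^sub>R z + d)\<bar>} = (\<lambda>w. \<sigma> *\<^sub>R w + (- (\<sigma> *\<^sub>R d))) ` {w. ennreal c < ennreal \<bar>\<psi> w\<bar>}"
      proof (intro set_eqI iffI)
        fix z assume "z \<in> {z. ennreal c < ennreal \<bar>\<psi> (\<sigma> *\<^sub>R z + d)\<bar>}"
        moreover have "z = \<sigma> *\<^sub>R (\<sigma> *\<^sub>R z + d) + (- (\<sigma> *\<^sub>R d))"
          using \<sigma> by (simp add: scaleR_add_right abs_if split: if_splits)
        ultimately show "z \<in> (\<lambda>w. \<sigma> *\<^sub>R w + (- (\<sigma> *\<^sub>R d))) ` {w. ennreal c < ennreal \<bar>\<psi> w\<bar>}"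
          by (intro image_eqI[where x="\<sigma> *\<^sub>R z + d"]) auto
      next
        fix z assume "z \<in> (\<lambda>w. \<sigma> *\<^sub>R w + (- (\<sigma> *\<^sub>R d))) ` {w. ennreal c < ennreal \<bar>\<psi> w\<bar>}"
        then obtain w where w: "ennreal c < ennreal \<bar>\<psi> w\<bar>" "z = \<sigma> *\<^sub>R w + (- (\<sigma> *\<^sub>R d))" by auto
        then have "\<sigma> *\<^sub>R z + d = w"
          using \<sigma> by (simp add: scaleR_add_right abs_if split: if_splits)
        then show "z \<in> {z. ennreal c < ennreal \<bar>\<psi> (\<sigma> *\<^sub>R z + d)\<bar>}" using w by simp
      qed
      have "emeasure lebesgue {z. ennreal c < indicator S z * ennreal \<bar>\<psi> (\<sigma> *\<^sub>R z + d)\<bar>} \<le> min ?L (?D (ennreal c))"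
      proof -
        have "emeasure lebesgue (S \<inter> {z. ennreal c < ennreal \<bar>\<psi> (\<sigma> *\<^sub>R z + d)\<bar>}) \<le> ?L"
          by (intro emeasure_mono) auto
        moreover have "emeasure lebesgue (S \<inter> {z. ennreal c < ennreal \<bar>\<psi> (\<sigma> *\<^sub>R z + d)\<bar>}) \<le> emeasure lebesgue {z. ennreal c < ennreal \<bar>\<psi> (\<sigma> *\<^sub>R z + d)\<bar>}"
          by (intro emeasure_mono sets_lebesgue_Collect) (auto, measurable)
        moreover have "emeasure lebesgue {z. ennreal c < ennreal \<bar>\<psi> (\<sigma> *\<^sub>R z + d)\<bar>} = ?D (ennreal c)"
          unfolding e2 using emeasure_lebesgue_affine[of \<sigma> "- (\<sigma> *\<^sub>R d)" "{w. ennreal c < ennreal \<bar>\<psi> w\<bar>}"] \<sigma>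
          by simp
        ultimately show ?thesis unfolding e1 by simp
      qed
      also have "\<dots> = emeasure lborel {r. 0 < r \<and> ennreal r < min ?L (?D (ennreal c))}"
        by (rule emeasure_Ioo_ennreal[symmetric])
      also have "\<dots> \<le> emeasure lborel {r. ennreal c < indicator {r. 0 < r \<and> ennreal r < ?L} r * decr_rearr \<psi> r}"
      proof (rule emeasure_mono)
        show "{r. 0 < r \<and> ennreal r < min ?L (?D (ennreal c))} \<subseteq> {r. ennreal c < indicator {r. 0 < r \<and> ennreal r < ?L} r * decr_rearr \<psi> r}"
          using decr_rearr_gt[OF \<psi>, of c] c by auto
        show "{r. ennreal c < indicator {r. 0 < r \<and> ennreal r < ?L} r * decr_rearr \<psi> r} \<in> sets lborel"
          using m2 by (simp add: pred_def[symmetric]) measurable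
      qed
      finally show ?thesis by (simp add: mult_left_mono)
    qed
  qed
  also have "\<dots> = (\<integral>\<^sup>+r. indicator {r. 0 < r \<and> ennreal r < ?L} r * decr_rearr \<psi> r \<partial>lborel)"
    using layer_cake[OF lborel.sigma_finite_measure_axioms m2] by simp
  finally show ?thesis .
qed

definition kk :: "('a::euclidean_space \<Rightarrow> real) \<Rightarrow> real \<Rightarrow> ennreal" where
  "kk \<psi> r = (\<integral>\<^sup>+u. indicator {0<..<1} u * decr_rearr \<psi> (r * u) \<partial>lborel)"

lemma kk_antimono: "r1 \<le> r2 \<Longrightarrow> kk \<psi> r2 \<le> kk \<psi> r1"
  unfolding kk_def
proof (intro nn_integral_mono)
  fix u :: real assume "r1 \<le> r2"
  then show "indicator {0<..<1} u * decr_rearr \<psi> (r2 * u) \<le> indicator {0<..<1} u * decr_rearr \<psi> (r1 * u)"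
    by (cases "u \<in> {0<..<1}") (auto intro!: decr_rearr_antimono mult_right_mono)
qed

lemma kk_measurable[measurable]: "kk \<psi> \<in> borel_measurable borel"
  by (rule antimono_borel_measurable) (rule kk_antimono)

lemma max_fn_kk: "0 < r \<Longrightarrow> max_fn \<psi> r = kk \<psi> r"
proof -
  assume r: "0 < r"
  have "(\<integral>\<^sup>+ s\<in>{0<..<r}. decr_rearr \<psi> s \<partial>lborel)
      = ennreal \<bar>r\<bar> * (\<integral>\<^sup>+x. decr_rearr \<psi> (0 + r * x) * indicator {0<..<r} (0 + r * x) \<partial>lborel)"
    using r by (intro nn_integral_real_affine) auto
  also have "(\<integral>\<^sup>+x. decr_rearr \<psi> (0 + r * x) * indicator {0<..<r} (0 + r * x) \<partial>lborel) = kk \<psi> r"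
    unfolding kk_def using r
    by (intro nn_integral_cong) (auto simp: indicator_def zero_less_mult_iff)
  finally show ?thesis
    unfolding max_fn_def using r
    by (simp add: mult.assoc[symmetric] ennreal_mult'[symmetric] del: ennreal_1) simp
qed

lemma max_fn_nonpos: "r \<le> 0 \<Longrightarrow> max_fn \<psi> r = 0"
  unfolding max_fn_def by (simp add: ennreal_neg)

lemma max_fn_eq: "max_fn \<psi> r = indicator {0<..} r * kk \<psi> r"
  by (cases "0 < r") (auto simp: max_fn_kk max_fn_nonpos)

lemma max_fn_measurable[measurable]: "max_fn \<psi> \<in> borel_measurable borel"
  unfolding max_fn_eq[abs_def] by measurable

lemma max_fn_antimono: "0 < r1 \<Longrightarrow> r1 \<le> r2 \<Longrightarrow> max_fn \<psi> r2 \<le> max_fn \<psi> r1"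
  by (simp add: max_fn_kk kk_antimono)

lemma max_fn_H: "0 < r \<Longrightarrow> ennreal r * max_fn \<psi> r =
   (\<integral>\<^sup>+s. indicator {s. 0 < s \<and> ennreal s < ennreal r} s * decr_rearr \<psi> s \<partial>lborel)"
proof -
  assume r: "0 < r"
  have "ennreal r * max_fn \<psi> r = (\<integral>\<^sup>+ s\<in>{0<..<r}. decr_rearr \<psi> s \<partial>lborel)"
    unfolding max_fn_def using r
    by (simp add: mult.assoc[symmetric] ennreal_mult'[symmetric] del: ennreal_1) simp
  also have "\<dots> = (\<integral>\<^sup>+s. indicator {s. 0 < s \<and> ennreal s < ennreal r} s * decr_rearr \<psi> s \<partial>lborel)"
    using r by (intro nn_integral_cong) (auto simp: indicator_def ennreal_less_iff)
  finally show ?thesis .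
qed

lemma lebesgue_id_borel[measurable]: "(\<lambda>x::'a::euclidean_space. x) \<in> lebesgue \<rightarrow>\<^sub>M borel"
  by (rule measurable_completion) (simp add: measurable_ident_sets)

lemma diff_LL_measurable[measurable]:
  "(\<lambda>p::'a::euclidean_space \<times> 'a. snd p - fst p) \<in> (lebesgue \<Otimes>\<^sub>M lebesgue) \<rightarrow>\<^sub>M borel"
proof -
  have "snd \<in> (lebesgue \<Otimes>\<^sub>M lebesgue) \<rightarrow>\<^sub>M (borel::'a measure)"
    using measurable_compose[OF measurable_snd lebesgue_id_borel] by (simp add: comp_def)
  moreover have "fst \<in> (lebesgue \<Otimes>\<^sub>M lebesgue) \<rightarrow>\<^sub>M (borel::'a measure)"
    using measurable_compose[OF measurable_fst lebesgue_id_borel] by (simp add: comp_def)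
  ultimately show ?thesis by measurable
qed

definition GG :: "('a::euclidean_space \<Rightarrow> real) \<Rightarrow> 'a set \<Rightarrow> 'a set \<Rightarrow> ennreal" where
  "GG \<psi> A B = (\<integral>\<^sup>+x. indicator A x * (\<integral>\<^sup>+y. indicator B y * ennreal \<bar>\<psi> (y - x)\<bar> \<partial>lebesgue) \<partial>lebesgue)"

lemma GG_prod:
  fixes \<psi> :: "'a::euclidean_space \<Rightarrow> real"
  assumes [measurable]: "\<psi> \<in> borel_measurable borel" "A \<in> sets lebesgue" "B \<in> sets lebesgue"
  shows "GG \<psi> A B = (\<integral>\<^sup>+p. indicator A (fst p) * indicator B (snd p) * ennreal \<bar>\<psi> (snd p - fst p)\<bar> \<partial>(lebesgue \<Otimes>\<^sub>M lebesgue))"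
proof -
  interpret L: sigma_finite_measure "lebesgue::'a measure" by (rule sigma_finite_lebesgue)
  have "GG \<psi> A B = (\<integral>\<^sup>+x. \<integral>\<^sup>+y. indicator A x * indicator B y * ennreal \<bar>\<psi> (y - x)\<bar> \<partial>lebesgue \<partial>lebesgue)"
    unfolding GG_def
    by (intro nn_integral_cong) (simp add: mult.assoc nn_integral_cmult)
  also have "\<dots> = (\<integral>\<^sup>+p. indicator A (fst p) * indicator B (snd p) * ennreal \<bar>\<psi> (snd p - fst p)\<bar> \<partial>(lebesgue \<Otimes>\<^sub>M lebesgue))"
    using L.nn_integral_fst[of "\<lambda>p. indicator A (fst p) * indicator B (snd p) * ennreal \<bar>\<psi> (snd p - fst p)\<bar>" lebesgue]
    by simp
  finally show ?thesis .
qed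

lemma GG_swap:
  fixes \<psi> :: "'a::euclidean_space \<Rightarrow> real"
  assumes [measurable]: "\<psi> \<in> borel_measurable borel" "A \<in> sets lebesgue" "B \<in> sets lebesgue"
  shows "GG \<psi> A B = (\<integral>\<^sup>+y. indicator B y * (\<integral>\<^sup>+x. indicator A x * ennreal \<bar>\<psi> (y - x)\<bar> \<partial>lebesgue) \<partial>lebesgue)"
proof -
  interpret L: sigma_finite_measure "lebesgue::'a measure" by (rule sigma_finite_lebesgue)
  interpret LL: pair_sigma_finite "lebesgue::'a measure" "lebesgue::'a measure" ..
  have "GG \<psi> A B = (\<integral>\<^sup>+x. \<integral>\<^sup>+y. indicator A x * indicator B y * ennreal \<bar>\<psi> (y - x)\<bar> \<partial>lebesgue \<partial>lebesgue)"
    unfolding GG_def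
    by (intro nn_integral_cong) (simp add: mult.assoc nn_integral_cmult)
  also have "\<dots> = (\<integral>\<^sup>+y. \<integral>\<^sup>+x. indicator A x * indicator B y * ennreal \<bar>\<psi> (y - x)\<bar> \<partial>lebesgue \<partial>lebesgue)"
    by (rule LL.Fubini'[symmetric]) measurable
  also have "\<dots> = (\<integral>\<^sup>+y. indicator B y * (\<integral>\<^sup>+x. indicator A x * ennreal \<bar>\<psi> (y - x)\<bar> \<partial>lebesgue) \<partial>lebesgue)"
    by (intro nn_integral_cong) (simp add: nn_integral_cmult[symmetric] mult_ac)
  finally show ?thesis .
qed

abbreviation HH :: "('a::euclidean_space \<Rightarrow> real) \<Rightarrow> ennreal \<Rightarrow> ennreal" where
  "HH \<psi> L \<equiv> (\<integral>\<^sup>+r. indicator {r. 0 < r \<and> ennreal r < L} r * decr_rearr \<psi> r \<partial>lborel)"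

lemma GG_bound1:
  fixes \<psi> :: "'a::euclidean_space \<Rightarrow> real"
  assumes [measurable]: "\<psi> \<in> borel_measurable borel" "A \<in> sets lebesgue" "B \<in> sets lebesgue"
  shows "GG \<psi> A B \<le> emeasure lebesgue A * HH \<psi> (emeasure lebesgue B)"
proof -
  have "GG \<psi> A B \<le> (\<integral>\<^sup>+x. indicator A x * HH \<psi> (emeasure lebesgue B) \<partial>lebesgue)"
    unfolding GG_def
  proof (intro nn_integral_mono mult_left_mono)
    fix x :: 'a
    have "(\<integral>\<^sup>+y. indicator B y * ennreal \<bar>\<psi> (y - x)\<bar> \<partial>lebesgue) = (\<integral>\<^sup>+y. indicator B y * ennreal \<bar>\<psi> (1 *\<^sub>R y + (- x))\<bar> \<partial>lebesgue)"
      by simp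
    also have "\<dots> \<le> HH \<psi> (emeasure lebesgue B)"
      by (rule HL) measurable
    finally show "(\<integral>\<^sup>+y. indicator B y * ennreal \<bar>\<psi> (y - x)\<bar> \<partial>lebesgue) \<le> HH \<psi> (emeasure lebesgue B)" .
  qed simp
  also have "\<dots> = emeasure lebesgue A * HH \<psi> (emeasure lebesgue B)"
    by (simp add: nn_integral_multc)
  finally show ?thesis .
qed

lemma GG_bound2:
  fixes \<psi> :: "'a::euclidean_space \<Rightarrow> real"
  assumes [measurable]: "\<psi> \<in> borel_measurable borel" "A \<in> sets lebesgue" "B \<in> sets lebesgue"
  shows "GG \<psi> A B \<le> emeasure lebesgue B * HH \<psi> (emeasure lebesgue A)"
proof -
  have "GG \<psi> A B \<le> (\<integral>\<^sup>+y. indicator B y * HH \<psi> (emeasure lebesgue A) \<partial>lebesgue)"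
    unfolding GG_swap[OF assms]
  proof (intro nn_integral_mono mult_left_mono)
    fix y :: 'a
    have "(\<integral>\<^sup>+x. indicator A x * ennreal \<bar>\<psi> (y - x)\<bar> \<partial>lebesgue) = (\<integral>\<^sup>+x. indicator A x * ennreal \<bar>\<psi> ((-1) *\<^sub>R x + y)\<bar> \<partial>lebesgue)"
      by simp
    also have "\<dots> \<le> HH \<psi> (emeasure lebesgue A)"
      by (rule HL) measurable
    finally show "(\<integral>\<^sup>+x. indicator A x * ennreal \<bar>\<psi> (y - x)\<bar> \<partial>lebesgue) \<le> HH \<psi> (emeasure lebesgue A)" .
  qed simp
  also have "\<dots> = emeasure lebesgue B * HH \<psi> (emeasure lebesgue A)"
    by (simp add: nn_integral_multc)
  finally show ?thesis .
qed

definition Phi :: "('a::euclidean_space \<Rightarrow> real) \<Rightarrow> ennreal \<Rightarrow> ennreal \<Rightarrow> ennreal" where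
  "Phi \<psi> \<alpha> \<beta> = (\<integral>\<^sup>+s. indicator {s. 0 < s \<and> ennreal s < \<alpha>} s *
      (\<integral>\<^sup>+t. indicator {t. 0 < t \<and> ennreal t < \<beta>} t * max_fn \<psi> (max t s) \<partial>lborel) \<partial>lborel)"

lemma Phi_mono: "\<alpha> \<le> \<alpha>' \<Longrightarrow> \<beta> \<le> \<beta>' \<Longrightarrow> Phi \<psi> \<alpha> \<beta> \<le> Phi \<psi> \<alpha>' \<beta>'"
  unfolding Phi_def
  by (intro nn_integral_mono mult_mono) (auto simp: indicator_def intro: less_le_trans)

lemma Phi_lower:
  assumes "0 < m" "a \<le> m" "b \<le> m" "0 \<le> a" "0 \<le> b"
  shows "ennreal a * ennreal b * max_fn \<psi> m \<le> Phi \<psi> (ennreal a) (ennreal b)"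
proof -
  have "(\<integral>\<^sup>+s. indicator {s. 0 < s \<and> ennreal s < ennreal a} s *
      (\<integral>\<^sup>+t. indicator {t. 0 < t \<and> ennreal t < ennreal b} t * max_fn \<psi> m \<partial>lborel) \<partial>lborel) \<le> Phi \<psi> (ennreal a) (ennreal b)"
    unfolding Phi_def
  proof (intro nn_integral_mono)
    fix s :: real
    show "indicator {s. 0 < s \<and> ennreal s < ennreal a} s * (\<integral>\<^sup>+t. indicator {t. 0 < t \<and> ennreal t < ennreal b} t * max_fn \<psi> m \<partial>lborel)
      \<le> indicator {s. 0 < s \<and> ennreal s < ennreal a} s * (\<integral>\<^sup>+t. indicator {t. 0 < t \<and> ennreal t < ennreal b} t * max_fn \<psi> (max t s) \<partial>lborel)"
    proof (cases "0 < s \<and> ennreal s < ennreal a")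
      case False then show ?thesis by simp
    next
      case s: True
      have "(\<integral>\<^sup>+t. indicator {t. 0 < t \<and> ennreal t < ennreal b} t * max_fn \<psi> m \<partial>lborel)
        \<le> (\<integral>\<^sup>+t. indicator {t. 0 < t \<and> ennreal t < ennreal b} t * max_fn \<psi> (max t s) \<partial>lborel)"
      proof (intro nn_integral_mono)
        fix t :: real
        show "indicator {t. 0 < t \<and> ennreal t < ennreal b} t * max_fn \<psi> m \<le> indicator {t. 0 < t \<and> ennreal t < ennreal b} t * max_fn \<psi> (max t s)"
        proof (cases "0 < t \<and> ennreal t < ennreal b")
          case False then show ?thesis by simp
        next
          case True
          then have "max t s \<le> m" using s assms by (auto simp: ennreal_less_iff)
          then have "max_fn \<psi> m \<le> max_fn \<psi> (max t s)"
            using s by (intro max_fn_antimono) auto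
          then show ?thesis by (simp add: mult_left_mono)
        qed
      qed
      then show ?thesis by (rule mult_left_mono) simp
    qed
  qed
  moreover have "(\<integral>\<^sup>+s. indicator {s. 0 < s \<and> ennreal s < ennreal a} s *
      (\<integral>\<^sup>+t. indicator {t. 0 < t \<and> ennreal t < ennreal b} t * max_fn \<psi> m \<partial>lborel) \<partial>lborel)
     = ennreal a * ennreal b * max_fn \<psi> m"
    by (simp add: nn_integral_cmult_indicator nn_integral_multc emeasure_Ioo_ennreal mult.assoc del: ennreal_less_iff)
  ultimately show ?thesis by simp
qed

lemma GG_finite:
  fixes \<psi> :: "'a::euclidean_space \<Rightarrow> real"
  assumes [measurable]: "\<psi> \<in> borel_measurable borel" "A \<in> sets lebesgue" "B \<in> sets lebesgue"
    and fA: "emeasure lebesgue A \<noteq> \<infinity>" and fB: "emeasure lebesgue B \<noteq> \<infinity>"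
  shows "GG \<psi> A B \<le> Phi \<psi> (emeasure lebesgue A) (emeasure lebesgue B)"
proof -
  obtain a where a: "emeasure lebesgue A = ennreal a" "0 \<le> a" using fA by (cases "emeasure lebesgue A") auto
  obtain b where b: "emeasure lebesgue B = ennreal b" "0 \<le> b" using fB by (cases "emeasure lebesgue B") auto
  show ?thesis
  proof (cases "a = 0 \<or> b = 0")
    case True
    then have "GG \<psi> A B = 0"
      using GG_bound1[OF assms(1-3)] GG_bound2[OF assms(1-3)] a b by auto
    then show ?thesis by simp
  next
    case False
    show ?thesis
    proof (cases "b \<le> a")
      case True
      have "GG \<psi> A B \<le> ennreal b * (ennreal a * max_fn \<psi> a)"
        using GG_bound2[OF assms(1-3)] a b False by (simp add: max_fn_H)
      also have "\<dots> \<le> Phi \<psi> (ennreal a) (ennreal b)"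
        using Phi_lower[of a a b \<psi>] True a b False by (simp add: mult_ac)
      finally show ?thesis using a b by simp
    next
      case True: False
      have "GG \<psi> A B \<le> ennreal a * (ennreal b * max_fn \<psi> b)"
        using GG_bound1[OF assms(1-3)] a b False by (simp add: max_fn_H)
      also have "\<dots> \<le> Phi \<psi> (ennreal a) (ennreal b)"
        using Phi_lower[of b a b \<psi>] True a b False by (simp add: mult_ac)
      finally show ?thesis using a b by simp
    qed
  qed
qed

lemma GG_le_Phi:
  fixes \<psi> :: "'a::euclidean_space \<Rightarrow> real"
  assumes [measurable]: "\<psi> \<in> borel_measurable borel" "A \<in> sets lebesgue" "B \<in> sets lebesgue"
  shows "GG \<psi> A B \<le> Phi \<psi> (emeasure lebesgue A) (emeasure lebesgue B)"
proof -
  define An where "An n = A \<inter> cball 0 (real n)" for n :: nat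
  define Bn where "Bn n = B \<inter> cball 0 (real n)" for n :: nat
  have [measurable]: "An n \<in> sets lebesgue" "Bn n \<in> sets lebesgue" for n
    unfolding An_def Bn_def by auto
  define F where "F n p = indicator (An n) (fst p) * indicator (Bn n) (snd p) * ennreal \<bar>\<psi> (snd p - fst p)\<bar>" for n and p :: "'a \<times> 'a"
  have Fm[measurable]: "F n \<in> borel_measurable (lebesgue \<Otimes>\<^sub>M lebesgue)" for n
    unfolding F_def by measurable
  have inc: "incseq F"
    unfolding incseq_def le_fun_def F_def An_def Bn_def
    by (auto intro!: mult_right_mono simp: indicator_def)
  have sup: "(SUP n. F n p) = indicator A (fst p) * indicator B (snd p) * ennreal \<bar>\<psi> (snd p - fst p)\<bar>" for p
  proof -
    define c :: "nat \<Rightarrow> ennreal" where "c n = indicator (cball 0 (real n)) (fst p) * indicator (cball 0 (real n)) (snd p)" for n :: nat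
    have Fc: "F n p = c n * (indicator A (fst p) * indicator B (snd p) * ennreal \<bar>\<psi> (snd p - fst p)\<bar>)" for n
      unfolding F_def c_def An_def Bn_def by (simp add: indicator_inter_arith mult_ac)
    obtain N :: nat where N: "max (norm (fst p)) (norm (snd p)) \<le> real N" using real_arch_simple by blast
    have "(SUP n. c n) = 1"
    proof (rule antisym)
      show "(SUP n. c n) \<le> 1" unfolding c_def by (intro SUP_least) (auto simp: indicator_def)
      have "c N = 1" using N unfolding c_def by (auto simp: indicator_def)
      then show "1 \<le> (SUP n. c n)" by (metis SUP_upper UNIV_I)
    qed
    then show ?thesis unfolding Fc by (simp add: SUP_mult_right_ennreal[symmetric])
  qed
  have "GG \<psi> A B = (\<integral>\<^sup>+p. (SUP n. F n p) \<partial>(lebesgue \<Otimes>\<^sub>M lebesgue))"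
    unfolding sup by (rule GG_prod) measurable
  also have "\<dots> = (SUP n. \<integral>\<^sup>+p. F n p \<partial>(lebesgue \<Otimes>\<^sub>M lebesgue))"
    by (rule nn_integral_monotone_convergence_SUP[OF inc Fm])
  also have "\<dots> = (SUP n. GG \<psi> (An n) (Bn n))"
    unfolding F_def by (subst GG_prod) measurable
  also have "\<dots> \<le> Phi \<psi> (emeasure lebesgue A) (emeasure lebesgue B)"
  proof (rule SUP_least)
    fix n
    have fin: "emeasure lebesgue (An n) \<noteq> \<infinity>" "emeasure lebesgue (Bn n) \<noteq> \<infinity>"
    proof -
      have "emeasure lebesgue (An n) \<le> emeasure lebesgue (cball (0::'a) (real n))"
        by (rule emeasure_mono) (auto simp: An_def)
      moreover have "emeasure lebesgue (Bn n) \<le> emeasure lebesgue (cball (0::'a) (real n))"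
        by (rule emeasure_mono) (auto simp: Bn_def)
      moreover have "emeasure lebesgue (cball (0::'a) (real n)) < \<infinity>"
        using emeasure_lborel_cball_finite by simp
      ultimately show "emeasure lebesgue (An n) \<noteq> \<infinity>" "emeasure lebesgue (Bn n) \<noteq> \<infinity>"
        by (auto simp: top_unique[symmetric] dest: order.strict_trans1)
    qed
    have "GG \<psi> (An n) (Bn n) \<le> Phi \<psi> (emeasure lebesgue (An n)) (emeasure lebesgue (Bn n))"
      by (rule GG_finite) (use fin in measurable)
    also have "\<dots> \<le> Phi \<psi> (emeasure lebesgue A) (emeasure lebesgue B)"
      by (intro Phi_mono emeasure_mono) (auto simp: An_def Bn_def)
    finally show "GG \<psi> (An n) (Bn n) \<le> Phi \<psi> (emeasure lebesgue A) (emeasure lebesgue B)" .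
  qed
  finally show ?thesis .
qed

lemma ennreal_layer: "v = (\<integral>\<^sup>+a. indicator {0<..} a * indicator {a::real. ennreal a < v} a \<partial>lborel)"
proof -
  have "(\<integral>\<^sup>+a. indicator {0<..} a * indicator {a::real. ennreal a < v} a \<partial>lborel)
      = (\<integral>\<^sup>+a. indicator {a::real. 0 < a \<and> ennreal a < v} a \<partial>lborel)"
    by (intro nn_integral_cong) (auto simp: indicator_def)
  also have "\<dots> = v" by (subst nn_integral_indicator) (auto simp: emeasure_Ioo_ennreal)
  finally show ?thesis ..
qed

lemma LC2:
  fixes h g :: "'a \<Rightarrow> ennreal"
  assumes M: "sigma_finite_measure M" and [measurable]: "h \<in> borel_measurable M" "g \<in> borel_measurable M"
  shows "(\<integral>\<^sup>+x. h x * g x \<partial>M) = (\<integral>\<^sup>+a. indicator {0<..} a * (\<integral>\<^sup>+x. indicator {x. ennreal a < h x} x * g x \<partial>M) \<partial>lborel)"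
proof -
  interpret pair_sigma_finite M lborel
    using M by (simp add: pair_sigma_finite_def lborel.sigma_finite_measure_axioms)
  have "(\<integral>\<^sup>+x. h x * g x \<partial>M) = (\<integral>\<^sup>+x. \<integral>\<^sup>+a. indicator {0<..} a * indicator {a::real. ennreal a < h x} a * g x \<partial>lborel \<partial>M)"
    by (subst ennreal_layer[of "h _"]) (simp add: nn_integral_multc)
  also have "\<dots> = (\<integral>\<^sup>+a. \<integral>\<^sup>+x. indicator {0<..} a * indicator {a::real. ennreal a < h x} a * g x \<partial>M \<partial>lborel)"
    by (rule Fubini'[symmetric]) measurable
  also have "\<dots> = (\<integral>\<^sup>+a. indicator {0<..} a * (\<integral>\<^sup>+x. indicator {x. ennreal a < h x} x * g x \<partial>M) \<partial>lborel)"
    by (intro nn_integral_cong) (simp add: nn_integral_cmult[symmetric] mult.assoc indicator_def)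
  finally show ?thesis .
qed

lemma L1swap:
  fixes h :: "real \<Rightarrow> ennreal" and \<alpha> :: "real \<Rightarrow> ennreal"
  assumes [measurable]: "h \<in> borel_measurable borel" "\<alpha> \<in> borel_measurable borel"
  shows "(\<integral>\<^sup>+a. indicator {0<..} a * (\<integral>\<^sup>+s. indicator {s. 0 < s \<and> ennreal s < \<alpha> a} s * h s \<partial>lborel) \<partial>lborel)
    = (\<integral>\<^sup>+s. indicator {0<..} s * h s * (\<integral>\<^sup>+a. indicator {0<..} a * indicator {a. ennreal s < \<alpha> a} a \<partial>lborel) \<partial>lborel)"
proof -
  have "(\<integral>\<^sup>+a. indicator {0<..} a * (\<integral>\<^sup>+s. indicator {s. 0 < s \<and> ennreal s < \<alpha> a} s * h s \<partial>lborel) \<partial>lborel)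
     = (\<integral>\<^sup>+a. \<integral>\<^sup>+s. indicator {0<..} a * indicator {a. ennreal s < \<alpha> a} a * (indicator {0<..} s * h s) \<partial>lborel \<partial>lborel)"
    by (intro nn_integral_cong, subst nn_integral_cmult[symmetric]) (auto intro!: nn_integral_cong simp: indicator_def)
  also have "\<dots> = (\<integral>\<^sup>+s. \<integral>\<^sup>+a. indicator {0<..} a * indicator {a. ennreal s < \<alpha> a} a * (indicator {0<..} s * h s) \<partial>lborel \<partial>lborel)"
    by (rule lborel_pair.Fubini') measurable
  also have "\<dots> = (\<integral>\<^sup>+s. indicator {0<..} s * h s * (\<integral>\<^sup>+a. indicator {0<..} a * indicator {a. ennreal s < \<alpha> a} a \<partial>lborel) \<partial>lborel)"
    by (intro nn_integral_cong, subst nn_integral_multc) (measurable, simp add: mult_ac)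
  finally show ?thesis .
qed

lemma level_measure_measurable:
  fixes h :: "'a::euclidean_space \<Rightarrow> ennreal"
  assumes [measurable]: "h \<in> borel_measurable lebesgue"
  shows "(\<lambda>a::real. emeasure lebesgue {x. ennreal a < h x}) \<in> borel_measurable borel"
proof (rule antimono_borel_measurable)
  fix a1 a2 :: real assume "a1 \<le> a2"
  then show "emeasure lebesgue {x. ennreal a2 < h x} \<le> emeasure lebesgue {x. ennreal a1 < h x}"
    by (intro emeasure_mono sets_lebesgue_Collect) (auto intro: le_less_trans[OF ennreal_leI], measurable)
qed

lemma Na_bound:
  fixes \<mu> :: "'a::euclidean_space \<Rightarrow> real"
  assumes [measurable]: "\<mu> \<in> borel_measurable lebesgue" "W \<in> sets lebesgue"
  shows "indicator {0<..} s * (\<integral>\<^sup>+a. indicator {0<..} a * indicator {a. ennreal s < emeasure lebesgue {x. ennreal a < indicator W x * ennreal (\<mu> x)}} a \<partial>lborel)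
     \<le> indicator {s. 0 < s \<and> ennreal s < emeasure lebesgue W} s * decr_rearr \<mu> s"
proof (cases "0 < s")
  case False then show ?thesis by simp
next
  case s: True
  let ?A = "\<lambda>a. {x. ennreal a < indicator W x * ennreal (\<mu> x)}"
  have AW: "emeasure lebesgue (?A a) \<le> emeasure lebesgue W" for a :: real
    by (rule emeasure_mono) (auto simp: indicator_def)
  show ?thesis
  proof (cases "ennreal s < emeasure lebesgue W")
    case False
    have z: "indicator {0<..} a * indicator {a. ennreal s < emeasure lebesgue (?A a)} a = (0::ennreal)" for a :: real
    proof -
      have "\<not> ennreal s < emeasure lebesgue (?A a)" using False AW[of a] by (meson leD order.strict_trans2 not_less)
      then show ?thesis by simp
    qed
    have "(\<integral>\<^sup>+a. indicator {0<..} a * indicator {a. ennreal s < emeasure lebesgue (?A a)} a \<partial>lborel) = 0"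
      by (subst z) simp
    then show ?thesis by simp
  next
    case True
    have "(\<integral>\<^sup>+a. indicator {0<..} a * indicator {a. ennreal s < emeasure lebesgue (?A a)} a \<partial>lborel) \<le> decr_rearr \<mu> s"
      unfolding decr_rearr_def
    proof (rule Inf_greatest)
      fix c assume c: "c \<in> {c. emeasure lebesgue {x. c < ennreal \<bar>\<mu> x\<bar>} \<le> ennreal s}"
      have "(\<integral>\<^sup>+a. indicator {0<..} a * indicator {a. ennreal s < emeasure lebesgue (?A a)} a \<partial>lborel)
         \<le> (\<integral>\<^sup>+a. indicator {a. 0 < a \<and> ennreal a < c} a \<partial>lborel)"
      proof (rule nn_integral_mono)
        fix a :: real
        show "indicator {0<..} a * indicator {a. ennreal s < emeasure lebesgue (?A a)} a \<le> (indicator {a. 0 < a \<and> ennreal a < c} a :: ennreal)"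
        proof (cases "0 < a \<and> ennreal s < emeasure lebesgue (?A a)")
          case False then show ?thesis by (cases "0 < a") auto
        next
          case a: True
          have "ennreal a < c"
          proof (rule ccontr)
            assume "\<not> ennreal a < c"
            then have "c \<le> ennreal a" by simp
            then have "?A a \<subseteq> {x. c < ennreal \<bar>\<mu> x\<bar>}"
              by (auto simp: indicator_def split: if_splits intro: order.strict_trans1 order.strict_trans2 ennreal_leI)
            then have "emeasure lebesgue (?A a) \<le> emeasure lebesgue {x. c < ennreal \<bar>\<mu> x\<bar>}"
              by (intro emeasure_mono sets_lebesgue_Collect) measurable
            then show False using a c by auto
          qed
          then show ?thesis using a by simp
        qed
      qed
      also have "\<dots> = c" by (simp add: emeasure_Ioo_ennreal)
      finally show "(\<integral>\<^sup>+a. indicator {0<..} a * indicator {a. ennreal s < emeasure lebesgue (?A a)} a \<partial>lborel) \<le> c" .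
    qed
    then show ?thesis using s True by simp
  qed
qed

lemma MAIN_NN:
  fixes \<mu> \<nu> \<psi> :: "'a::euclidean_space \<Rightarrow> real"
  assumes [measurable]: "\<mu> \<in> borel_measurable lebesgue" "\<nu> \<in> borel_measurable lebesgue"
    "\<psi> \<in> borel_measurable borel" "W \<in> sets lebesgue" "E \<in> sets lebesgue"
  shows "(\<integral>\<^sup>+x. (indicator W x * ennreal (\<mu> x)) * (\<integral>\<^sup>+y. (indicator E y * ennreal (\<nu> y)) * ennreal \<bar>\<psi> (y - x)\<bar> \<partial>lebesgue) \<partial>lebesgue)
    \<le> (\<integral>\<^sup>+ s\<in>{s. 0 < s \<and> ennreal s < emeasure lebesgue W}.
          decr_rearr \<mu> s * (\<integral>\<^sup>+ t\<in>{t. 0 < t \<and> ennreal t < emeasure lebesgue E}.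
             decr_rearr \<nu> t * max_fn \<psi> (max t s) \<partial>lborel) \<partial>lborel)"
proof -
  interpret L: sigma_finite_measure "lebesgue::'a measure" by (rule sigma_finite_lebesgue)
  interpret LB: pair_sigma_finite "lebesgue::'a measure" lborel
    by (simp add: pair_sigma_finite_def lborel.sigma_finite_measure_axioms L.sigma_finite_measure_axioms)
  define Mu where "Mu x = indicator W x * ennreal (\<mu> x)" for x
  define Nu where "Nu y = indicator E y * ennreal (\<nu> y)" for y
  have [measurable]: "Mu \<in> borel_measurable lebesgue" "Nu \<in> borel_measurable lebesgue"
    unfolding Mu_def Nu_def by measurable
  define \<alpha> where "\<alpha> a = emeasure lebesgue {x. ennreal a < Mu x}" for a :: real
  define \<beta> where "\<beta> b = emeasure lebesgue {y. ennreal b < Nu y}" for b :: real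
  have [measurable]: "\<alpha> \<in> borel_measurable borel" "\<beta> \<in> borel_measurable borel"
    unfolding \<alpha>_def \<beta>_def by (rule level_measure_measurable, measurable)+
  define I where "I x = (\<integral>\<^sup>+y. Nu y * ennreal \<bar>\<psi> (y - x)\<bar> \<partial>lebesgue)" for x
  have [measurable]: "I \<in> borel_measurable lebesgue" unfolding I_def by measurable
  define J where "J x b = (\<integral>\<^sup>+y. indicator {y. ennreal b < Nu y} y * ennreal \<bar>\<psi> (y - x)\<bar> \<partial>lebesgue)" for x and b :: real
  have [measurable]: "case_prod J \<in> borel_measurable (lebesgue \<Otimes>\<^sub>M lborel)" unfolding J_def by measurable
  define kq where "kq s t = max_fn \<psi> (max t s)" for s t :: real
  define Nb where "Nb t = (\<integral>\<^sup>+b. indicator {0<..} b * indicator {b. ennreal t < \<beta> b} b \<partial>lborel)" for t :: real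
  define Na where "Na s = (\<integral>\<^sup>+a. indicator {0<..} a * indicator {a. ennreal s < \<alpha> a} a \<partial>lborel)" for s :: real
  define R where "R s = (\<integral>\<^sup>+t. indicator {0<..} t * kq s t * Nb t \<partial>lborel)" for s :: real
  have [measurable]: "R \<in> borel_measurable borel"
    unfolding R_def Nb_def kq_def by measurable

  have S1: "(\<integral>\<^sup>+x. Mu x * I x \<partial>lebesgue) = (\<integral>\<^sup>+a. indicator {0<..} a * (\<integral>\<^sup>+x. indicator {x. ennreal a < Mu x} x * I x \<partial>lebesgue) \<partial>lborel)"
    by (rule LC2) (rule L.sigma_finite_measure_axioms, measurable)
  have S2: "I x = (\<integral>\<^sup>+b. indicator {0<..} b * J x b \<partial>lborel)" for x
    unfolding I_def J_def
    by (rule LC2) (rule L.sigma_finite_measure_axioms, measurable)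
  have S3: "(\<integral>\<^sup>+x. indicator {x. ennreal a < Mu x} x * I x \<partial>lebesgue)
      = (\<integral>\<^sup>+b. indicator {0<..} b * GG \<psi> {x. ennreal a < Mu x} {y. ennreal b < Nu y} \<partial>lborel)" for a :: real
  proof -
    have "(\<integral>\<^sup>+x. indicator {x. ennreal a < Mu x} x * I x \<partial>lebesgue)
       = (\<integral>\<^sup>+x. \<integral>\<^sup>+b. indicator {x. ennreal a < Mu x} x * (indicator {0<..} b * J x b) \<partial>lborel \<partial>lebesgue)"
      unfolding S2 by (intro nn_integral_cong) (simp add: nn_integral_cmult)
    also have "\<dots> = (\<integral>\<^sup>+b. \<integral>\<^sup>+x. indicator {x. ennreal a < Mu x} x * (indicator {0<..} b * J x b) \<partial>lebesgue \<partial>lborel)"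
      by (rule LB.Fubini'[symmetric]) measurable
    also have "\<dots> = (\<integral>\<^sup>+b. indicator {0<..} b * GG \<psi> {x. ennreal a < Mu x} {y. ennreal b < Nu y} \<partial>lborel)"
      unfolding GG_def J_def
      by (intro nn_integral_cong) (simp add: nn_integral_cmult[symmetric] mult_ac)
    finally show ?thesis .
  qed
  have S5: "(\<integral>\<^sup>+b. indicator {0<..} b * Phi \<psi> (\<alpha> a) (\<beta> b) \<partial>lborel)
      = (\<integral>\<^sup>+s. indicator {s. 0 < s \<and> ennreal s < \<alpha> a} s * R s \<partial>lborel)" for a :: real
  proof -
    have "(\<integral>\<^sup>+b. indicator {0<..} b * Phi \<psi> (\<alpha> a) (\<beta> b) \<partial>lborel)
       = (\<integral>\<^sup>+b. \<integral>\<^sup>+s. indicator {0<..} b * (indicator {s. 0 < s \<and> ennreal s < \<alpha> a} s *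
            (\<integral>\<^sup>+t. indicator {t. 0 < t \<and> ennreal t < \<beta> b} t * kq s t \<partial>lborel)) \<partial>lborel \<partial>lborel)"
      unfolding Phi_def kq_def by (intro nn_integral_cong) (simp add: nn_integral_cmult)
    also have "\<dots> = (\<integral>\<^sup>+s. \<integral>\<^sup>+b. indicator {0<..} b * (indicator {s. 0 < s \<and> ennreal s < \<alpha> a} s *
            (\<integral>\<^sup>+t. indicator {t. 0 < t \<and> ennreal t < \<beta> b} t * kq s t \<partial>lborel)) \<partial>lborel \<partial>lborel)"
      by (rule lborel_pair.Fubini') (unfold kq_def, measurable)
    also have "\<dots> = (\<integral>\<^sup>+s. indicator {s. 0 < s \<and> ennreal s < \<alpha> a} s * (\<integral>\<^sup>+b. indicator {0<..} b *
            (\<integral>\<^sup>+t. indicator {t. 0 < t \<and> ennreal t < \<beta> b} t * kq s t \<partial>lborel) \<partial>lborel) \<partial>lborel)"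
    proof (intro nn_integral_cong)
      fix s :: real
      have m: "(\<lambda>b. indicator {0<..} b * (\<integral>\<^sup>+t. indicator {t. 0 < t \<and> ennreal t < \<beta> b} t * kq s t \<partial>lborel)) \<in> borel_measurable lborel"
        unfolding kq_def by measurable
      show "(\<integral>\<^sup>+b. indicator {0<..} b * (indicator {s. 0 < s \<and> ennreal s < \<alpha> a} s *
            (\<integral>\<^sup>+t. indicator {t. 0 < t \<and> ennreal t < \<beta> b} t * kq s t \<partial>lborel)) \<partial>lborel) =
         indicator {s. 0 < s \<and> ennreal s < \<alpha> a} s * (\<integral>\<^sup>+b. indicator {0<..} b *
            (\<integral>\<^sup>+t. indicator {t. 0 < t \<and> ennreal t < \<beta> b} t * kq s t \<partial>lborel) \<partial>lborel)"
        using nn_integral_cmult[OF m, of "indicator {s. 0 < s \<and> ennreal s < \<alpha> a} s"] by (simp add: mult_ac)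
    qed
    also have "\<dots> = (\<integral>\<^sup>+s. indicator {s. 0 < s \<and> ennreal s < \<alpha> a} s * R s \<partial>lborel)"
      unfolding R_def Nb_def
      by (intro nn_integral_cong arg_cong2[where f="(*)"] refl L1swap) (unfold kq_def, measurable)
    finally show ?thesis .
  qed

  have "(\<integral>\<^sup>+x. Mu x * I x \<partial>lebesgue)
      = (\<integral>\<^sup>+a. indicator {0<..} a * (\<integral>\<^sup>+b. indicator {0<..} b * GG \<psi> {x. ennreal a < Mu x} {y. ennreal b < Nu y} \<partial>lborel) \<partial>lborel)"
    unfolding S1 S3 ..
  also have "\<dots> \<le> (\<integral>\<^sup>+a. indicator {0<..} a * (\<integral>\<^sup>+b. indicator {0<..} b * Phi \<psi> (\<alpha> a) (\<beta> b) \<partial>lborel) \<partial>lborel)"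
  proof (intro nn_integral_mono mult_left_mono)
    fix a b :: real
    show "GG \<psi> {x. ennreal a < Mu x} {y. ennreal b < Nu y} \<le> Phi \<psi> (\<alpha> a) (\<beta> b)"
      unfolding \<alpha>_def \<beta>_def by (rule GG_le_Phi) (simp, (rule sets_lebesgue_Collect, measurable)+)
  qed simp_all
  also have "\<dots> = (\<integral>\<^sup>+a. indicator {0<..} a * (\<integral>\<^sup>+s. indicator {s. 0 < s \<and> ennreal s < \<alpha> a} s * R s \<partial>lborel) \<partial>lborel)"
    unfolding S5 ..
  also have "\<dots> = (\<integral>\<^sup>+s. indicator {0<..} s * R s * Na s \<partial>lborel)"
    unfolding Na_def by (rule L1swap) measurable
  also have "\<dots> \<le> (\<integral>\<^sup>+ s\<in>{s. 0 < s \<and> ennreal s < emeasure lebesgue W}.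
          decr_rearr \<mu> s * (\<integral>\<^sup>+ t\<in>{t. 0 < t \<and> ennreal t < emeasure lebesgue E}.
             decr_rearr \<nu> t * max_fn \<psi> (max t s) \<partial>lborel) \<partial>lborel)"
  proof (rule nn_integral_mono)
    fix s :: real
    have NaB: "indicator {0<..} s * Na s \<le> indicator {s. 0 < s \<and> ennreal s < emeasure lebesgue W} s * decr_rearr \<mu> s"
      unfolding Na_def \<alpha>_def Mu_def by (rule Na_bound) measurable
    have NbB: "indicator {0<..} t * Nb t \<le> indicator {t. 0 < t \<and> ennreal t < emeasure lebesgue E} t * decr_rearr \<nu> t" for t
      unfolding Nb_def \<beta>_def Nu_def by (rule Na_bound) measurable
    have RB: "R s \<le> (\<integral>\<^sup>+ t\<in>{t. 0 < t \<and> ennreal t < emeasure lebesgue E}. decr_rearr \<nu> t * max_fn \<psi> (max t s) \<partial>lborel)"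
      unfolding R_def kq_def
    proof (rule nn_integral_mono)
      fix t :: real
      have "indicator {0<..} t * max_fn \<psi> (max t s) * Nb t = (indicator {0<..} t * Nb t) * max_fn \<psi> (max t s)"
        by (simp add: mult_ac)
      also have "\<dots> \<le> (indicator {t. 0 < t \<and> ennreal t < emeasure lebesgue E} t * decr_rearr \<nu> t) * max_fn \<psi> (max t s)"
        by (rule mult_right_mono[OF NbB]) simp
      finally show "indicator {0<..} t * max_fn \<psi> (max t s) * Nb t \<le> decr_rearr \<nu> t * max_fn \<psi> (max t s) * indicator {t. 0 < t \<and> ennreal t < emeasure lebesgue E} t"
        by (simp add: mult_ac)
    qed
    have "indicator {0<..} s * R s * Na s = (indicator {0<..} s * Na s) * R s" by (simp add: mult_ac)
    also have "\<dots> \<le> (indicator {s. 0 < s \<and> ennreal s < emeasure lebesgue W} s * decr_rearr \<mu> s) *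
        (\<integral>\<^sup>+ t\<in>{t. 0 < t \<and> ennreal t < emeasure lebesgue E}. decr_rearr \<nu> t * max_fn \<psi> (max t s) \<partial>lborel)"
      by (rule mult_mono[OF NaB RB]) simp_all
    finally show "indicator {0<..} s * R s * Na s \<le> decr_rearr \<mu> s * (\<integral>\<^sup>+ t\<in>{t. 0 < t \<and> ennreal t < emeasure lebesgue E}.
             decr_rearr \<nu> t * max_fn \<psi> (max t s) \<partial>lborel) * indicator {s. 0 < s \<and> ennreal s < emeasure lebesgue W} s"
      by (simp add: mult_ac)
  qed
  finally show ?thesis unfolding Mu_def I_def Nu_def .
qed

lemma loc_int_measurable:
  fixes f :: "'a::euclidean_space \<Rightarrow> real"
  assumes h: "locally_integrable f" shows "f \<in> borel_measurable lebesgue"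
proof (rule borel_measurable_LIMSEQ_real)
  show "(\<lambda>x. indicator (cball 0 (real n)) x *\<^sub>R f x) \<in> borel_measurable lebesgue" for n
    using h unfolding locally_integrable_def set_integrable_def by (auto intro: borel_measurable_integrable)
  fix x :: 'a
  obtain N :: nat where N: "norm x \<le> real N" using real_arch_simple by blast
  show "(\<lambda>n. indicator (cball 0 (real n)) x *\<^sub>R f x) \<longlonglongrightarrow> f x"
  proof (rule tendsto_eventually)
    show "\<forall>\<^sub>F n in sequentially. indicator (cball 0 (real n)) x *\<^sub>R f x = f x"
      unfolding eventually_sequentially
      by (rule exI[of _ N]) (use N in \<open>auto simp: indicator_def\<close>)
  qed
qed

lemma AE_translate:
  fixes K K' :: "'a::euclidean_space \<Rightarrow> real"
  assumes "AE z in lborel. K z = K' z"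
  shows "AE y in lebesgue. K (y - x) = K' (y - x)"
proof -
  from assms obtain N where N: "{z \<in> space lborel. \<not> K z = K' z} \<subseteq> N" "emeasure lborel N = 0" "N \<in> sets lborel"
    by (rule AE_E)
  define N' where "N' = {y. y - x \<in> N}"
  have N'img: "N' = (\<lambda>z. 1 *\<^sub>R z + x) ` N"
    unfolding N'_def by (auto intro: image_eqI[where x="_ - x"])
  have "(\<lambda>y. y - x) \<in> borel_measurable (borel::'a measure)" by measurable
  then have N'b: "N' \<in> sets lborel"
    using measurable_sets[of "\<lambda>y. y - x" borel borel N] N(3) unfolding N'_def by (simp add: vimage_def)
  have "emeasure lebesgue N' = emeasure lebesgue N"
    unfolding N'img using emeasure_lebesgue_affine[of 1 x N] by simp
  also have "\<dots> = 0" using N by simp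
  finally have "N' \<in> null_sets lebesgue" using N'b by (auto simp: null_sets_def)
  then show ?thesis
    by (rule AE_I') (use N in \<open>auto simp: N'_def\<close>)
qed

lemma decr_rearr_AE:
  fixes K K' :: "'a::euclidean_space \<Rightarrow> real"
  assumes "AE z in lborel. K z = K' z" "K \<in> borel_measurable lebesgue" "K' \<in> borel_measurable lebesgue"
  shows "decr_rearr K = decr_rearr K'"
proof -
  have "emeasure lebesgue {x. c < ennreal \<bar>K x\<bar>} = emeasure lebesgue {x. c < ennreal \<bar>K' x\<bar>}" for c
  proof (rule emeasure_eq_AE)
    show "AE x in lebesgue. x \<in> {x. c < ennreal \<bar>K x\<bar>} \<longleftrightarrow> x \<in> {x. c < ennreal \<bar>K' x\<bar>}"
      using AE_completion[OF assms(1)] by eventually_elim auto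
    show "{x. c < ennreal \<bar>K x\<bar>} \<in> sets lebesgue" "{x. c < ennreal \<bar>K' x\<bar>} \<in> sets lebesgue"
      using assms(2,3) unfolding pred_def[symmetric] by (auto intro!: sets_lebesgue_Collect) measurable
  qed
  then show ?thesis unfolding decr_rearr_def[abs_def] by simp
qed

lemma abs_integral_le_nn:
  fixes f :: "'a \<Rightarrow> real"
  shows "ennreal \<bar>integral\<^sup>L M f\<bar> \<le> (\<integral>\<^sup>+x. ennreal \<bar>f x\<bar> \<partial>M)"
proof (cases "integrable M f")
  case True
  then show ?thesis using integral_norm_bound_ennreal[OF True] by simp
next
  case False
  then show ?thesis by (simp add: not_integrable_integral_eq)
qed

theorem lemma1:
  fixes \<mu> \<nu> K :: "'a::euclidean_space \<Rightarrow> real" and W E :: "'a set"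
  assumes "weight \<mu>" and "weight \<nu>" and "locally_integrable K"
    and "W \<in> sets lebesgue" and "E \<in> sets lebesgue"
  shows "ennreal \<bar>LINT x:W|lebesgue. \<mu> x * (LINT y:E|lebesgue. \<nu> y * K (y - x))\<bar>
    \<le> (\<integral>\<^sup>+ s\<in>{s. 0 < s \<and> ennreal s < emeasure lebesgue W}.
          decr_rearr \<mu> s * (\<integral>\<^sup>+ t\<in>{t. 0 < t \<and> ennreal t < emeasure lebesgue E}.
             decr_rearr \<nu> t * max_fn K (max t s) \<partial>lborel) \<partial>lborel)"
proof -
  have \<mu>pos: "0 \<le> \<mu> x" and \<nu>pos: "0 \<le> \<nu> x" for x
    using assms(1,2) unfolding weight_def by auto
  have \<mu>m: "\<mu> \<in> borel_measurable lebesgue" and \<nu>m: "\<nu> \<in> borel_measurable lebesgue"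
    using assms(1,2) unfolding weight_def by (auto intro: loc_int_measurable)
  have Km: "K \<in> borel_measurable (completion lborel)"
    using loc_int_measurable[OF assms(3)] by simp
  obtain K' where K'm: "K' \<in> borel_measurable lborel" and AE: "AE x in lborel. K x = K' x"
    using completion_ex_borel_measurable_real[OF Km] by blast
  have K'b: "K' \<in> borel_measurable borel" using K'm by simp
  have K'l: "K' \<in> borel_measurable lebesgue" using measurable_completion[OF K'm] by simp
  have dK: "decr_rearr K = decr_rearr K'"
    by (rule decr_rearr_AE[OF AE]) (use Km K'l in simp_all)
  have mK: "max_fn K = max_fn K'" unfolding max_fn_def[abs_def] dK ..
  have inner: "ennreal \<bar>LINT y:E|lebesgue. \<nu> y * K (y - x)\<bar>
     \<le> (\<integral>\<^sup>+y. (indicator E y * ennreal (\<nu> y)) * ennreal \<bar>K' (y - x)\<bar> \<partial>lebesgue)" for x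
  proof -
    have "ennreal \<bar>LINT y:E|lebesgue. \<nu> y * K (y - x)\<bar>
       \<le> (\<integral>\<^sup>+y. ennreal \<bar>indicator E y *\<^sub>R (\<nu> y * K (y - x))\<bar> \<partial>lebesgue)"
      unfolding set_lebesgue_integral_def by (rule abs_integral_le_nn)
    also have "\<dots> = (\<integral>\<^sup>+y. (indicator E y * ennreal (\<nu> y)) * ennreal \<bar>K' (y - x)\<bar> \<partial>lebesgue)"
    proof (rule nn_integral_cong_AE)
      show "AE y in lebesgue. ennreal \<bar>indicator E y *\<^sub>R (\<nu> y * K (y - x))\<bar> = (indicator E y * ennreal (\<nu> y)) * ennreal \<bar>K' (y - x)\<bar>"
        using AE_translate[OF AE, of x]
      proof eventually_elim
        case (elim y)
        then show ?case using \<nu>pos[of y]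
          by (cases "y \<in> E") (simp_all add: abs_mult ennreal_mult)
      qed
    qed
    finally show ?thesis .
  qed
  have "ennreal \<bar>LINT x:W|lebesgue. \<mu> x * (LINT y:E|lebesgue. \<nu> y * K (y - x))\<bar>
      \<le> (\<integral>\<^sup>+x. ennreal \<bar>indicator W x *\<^sub>R (\<mu> x * (LINT y:E|lebesgue. \<nu> y * K (y - x)))\<bar> \<partial>lebesgue)"
    unfolding set_lebesgue_integral_def[of lebesgue W] by (rule abs_integral_le_nn)
  also have "\<dots> \<le> (\<integral>\<^sup>+x. (indicator W x * ennreal (\<mu> x)) * (\<integral>\<^sup>+y. (indicator E y * ennreal (\<nu> y)) * ennreal \<bar>K' (y - x)\<bar> \<partial>lebesgue) \<partial>lebesgue)"
  proof (rule nn_integral_mono)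
    fix x
    have "ennreal \<bar>indicator W x *\<^sub>R (\<mu> x * (LINT y:E|lebesgue. \<nu> y * K (y - x)))\<bar>
        = (indicator W x * ennreal (\<mu> x)) * ennreal \<bar>LINT y:E|lebesgue. \<nu> y * K (y - x)\<bar>"
      using \<mu>pos[of x] by (cases "x \<in> W") (simp_all add: abs_mult ennreal_mult)
    also have "\<dots> \<le> (indicator W x * ennreal (\<mu> x)) * (\<integral>\<^sup>+y. (indicator E y * ennreal (\<nu> y)) * ennreal \<bar>K' (y - x)\<bar> \<partial>lebesgue)"
      by (rule mult_left_mono[OF inner]) simp
    finally show "ennreal \<bar>indicator W x *\<^sub>R (\<mu> x * (LINT y:E|lebesgue. \<nu> y * K (y - x)))\<bar>
        \<le> (indicator W x * ennreal (\<mu> x)) * (\<integral>\<^sup>+y. (indicator E y * ennreal (\<nu> y)) * ennreal \<bar>K' (y - x)\<bar> \<partial>lebesgue)" .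
  qed
  also have "\<dots> \<le> (\<integral>\<^sup>+ s\<in>{s. 0 < s \<and> ennreal s < emeasure lebesgue W}.
          decr_rearr \<mu> s * (\<integral>\<^sup>+ t\<in>{t. 0 < t \<and> ennreal t < emeasure lebesgue E}.
             decr_rearr \<nu> t * max_fn K' (max t s) \<partial>lborel) \<partial>lborel)"
    by (rule MAIN_NN[OF \<mu>m \<nu>m K'b assms(4,5)])
  finally show ?thesis unfolding mK .
qed

end
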